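(* Let $G$ be a perfect finite group and $\Phi:G\to\mathrm{GL}_N(\mathbb C)$ a faithful representation such that (a) $\Phi=\bigoplus_{i=1}^n\Phi_i$ with each $\Phi_i$ irreducible, and (b) each $L_i:=\Phi_i(G)$ is quasisimple with simple quotient $S_i=L_i/\mathbf Z(L_i)$. Then there is a subset $\{j_1,\dots,j_m\}\subseteq\{1,\dots,n\}$ such that $G$ is isomorphic to a central product $R_{j_1}*\cdots*R_{j_m}$ where each $R_{j_i}$ is a quasisimple cover of $S_{j_i}$. If moreover (c) $\mathrm{Tr}(\Phi(g))\ne0$ for all $g\in G$, and (d) for every quasisimple subgroup $H\le G$ and every proper subset $\mathcal X\subsetneq\{\Phi_1,\dots,\Phi_n\}$ such that $\Phi_i(H)=\Phi_i(G)$ for all $\Phi_i\in\mathcal X$, there is $h\in H$ with $\mathrm{Tr}(\Phi_i(h))=0$ for all $\Phi_i\in\mathcal X$, then $G$ is quasisimple. *)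

theory Defs
  imports "Jordan_Normal_Form.Matrix" "HOL-Algebra.SimpleGroups" "HOL-Algebra.Generated_Groups"
    "HOL-Algebra.Coset"
begin

definition mat_trace :: "complex mat \<Rightarrow> complex" where
  "mat_trace A = (\<Sum>i < dim_row A. A $$ (i, i))"

definition group_center :: "('a, 'b) monoid_scheme \<Rightarrow> 'a set" where
  "group_center G = {z \<in> carrier G. \<forall>g \<in> carrier G. z \<otimes>\<^bsub>G\<^esub> g = g \<otimes>\<^bsub>G\<^esub> z}"

definition perfect_group :: "('a, 'b) monoid_scheme \<Rightarrow> bool" where
  "perfect_group G \<longleftrightarrow> group G \<and> derived G (carrier G) = carrier G"

definition quasisimple :: "('a, 'b) monoid_scheme \<Rightarrow> bool" where
  "quasisimple G \<longleftrightarrow> perfect_group G \<and> simple_group (G Mod group_center G)"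

definition quasisimple_cover_of :: "('a, 'b) monoid_scheme \<Rightarrow> ('c, 'd) monoid_scheme \<Rightarrow> bool" where
  "quasisimple_cover_of R S \<longleftrightarrow> quasisimple R \<and> (R Mod group_center R) \<cong> S"

definition mat_group :: "nat \<Rightarrow> complex mat set \<Rightarrow> complex mat monoid" where
  "mat_group d S = \<lparr>carrier = S, mult = (*), one = 1\<^sub>m d\<rparr>"

definition representation :: "('a, 'b) monoid_scheme \<Rightarrow> nat \<Rightarrow> ('a \<Rightarrow> complex mat) \<Rightarrow> bool" where
  "representation G d \<Phi> \<longleftrightarrow>
     (\<forall>g \<in> carrier G. \<Phi> g \<in> carrier_mat d d \<and> invertible_mat (\<Phi> g)) \<and>
     (\<forall>g \<in> carrier G. \<forall>h \<in> carrier G. \<Phi> (g \<otimes>\<^bsub>G\<^esub> h) = \<Phi> g * \<Phi> h)"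

definition invariant_subspace :: "('a, 'b) monoid_scheme \<Rightarrow> nat \<Rightarrow> ('a \<Rightarrow> complex mat) \<Rightarrow> complex vec set \<Rightarrow> bool" where
  "invariant_subspace G d \<Phi> W \<longleftrightarrow>
     W \<subseteq> carrier_vec d \<and> 0\<^sub>v d \<in> W \<and>
     (\<forall>v \<in> W. \<forall>w \<in> W. v + w \<in> W) \<and>
     (\<forall>c :: complex. \<forall>v \<in> W. c \<cdot>\<^sub>v v \<in> W) \<and>
     (\<forall>g \<in> carrier G. \<forall>v \<in> W. \<Phi> g *\<^sub>v v \<in> W)"

definition irreducible_rep :: "('a, 'b) monoid_scheme \<Rightarrow> nat \<Rightarrow> ('a \<Rightarrow> complex mat) \<Rightarrow> bool" where
  "irreducible_rep G d \<Phi> \<longleftrightarrow> representation G d \<Phi> \<and> d > 0 \<and>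
     (\<forall>W. invariant_subspace G d \<Phi> W \<longrightarrow> W = {0\<^sub>v d} \<or> W = carrier_vec d)"

definition rep_image :: "('a, 'b) monoid_scheme \<Rightarrow> nat \<Rightarrow> ('a \<Rightarrow> complex mat) \<Rightarrow> complex mat monoid" where
  "rep_image G d \<Phi> = mat_group d (\<Phi> ` carrier G)"

definition internal_central_product :: "('a, 'b) monoid_scheme \<Rightarrow> 'i set \<Rightarrow> ('i \<Rightarrow> 'a set) \<Rightarrow> bool" where
  "internal_central_product G J H \<longleftrightarrow>
     (\<forall>j \<in> J. subgroup (H j) G) \<and>
     (\<forall>j \<in> J. \<forall>k \<in> J. j \<noteq> k \<longrightarrow> (\<forall>x \<in> H j. \<forall>y \<in> H k. x \<otimes>\<^bsub>G\<^esub> y = y \<otimes>\<^bsub>G\<^esub> x)) \<and>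
     generate G (\<Union>j \<in> J. H j) = carrier G"

end

theory Submission
  imports Defs "Jordan_Normal_Form.Char_Poly"
begin

lemma center_memI: "z \<in> carrier G \<Longrightarrow> (\<And>g. g \<in> carrier G \<Longrightarrow> z \<otimes>\<^bsub>G\<^esub> g = g \<otimes>\<^bsub>G\<^esub> z) \<Longrightarrow> z \<in> group_center G"
  unfolding group_center_def by auto

lemma center_carrier: "z \<in> group_center G \<Longrightarrow> z \<in> carrier G"
  unfolding group_center_def by auto

lemma center_comm: "z \<in> group_center G \<Longrightarrow> g \<in> carrier G \<Longrightarrow> z \<otimes>\<^bsub>G\<^esub> g = g \<otimes>\<^bsub>G\<^esub> z"
  unfolding group_center_def by auto

lemma (in group) center_subgroup: "subgroup (group_center G) G"
proof (rule subgroupI)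
  show "group_center G \<subseteq> carrier G" unfolding group_center_def by blast
  show "group_center G \<noteq> {}" using center_memI[of \<one> G] by auto
next
  fix a b assume a: "a \<in> group_center G" and b: "b \<in> group_center G"
  have ac: "a \<in> carrier G" "b \<in> carrier G" using center_carrier[OF a] center_carrier[OF b] by auto
  show "a \<otimes> b \<in> group_center G"
  proof (rule center_memI)
    show "a \<otimes> b \<in> carrier G" using ac by auto
    fix g assume g: "g \<in> carrier G"
    have "a \<otimes> b \<otimes> g = a \<otimes> (g \<otimes> b)" using ac g center_comm[OF b g] by (simp add: m_assoc)
    also have "\<dots> = (a \<otimes> g) \<otimes> b" using ac g by (simp add: m_assoc)
    also have "\<dots> = g \<otimes> (a \<otimes> b)" using ac g center_comm[OF a g] by (simp add: m_assoc)
    finally show "a \<otimes> b \<otimes> g = g \<otimes> (a \<otimes> b)" .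
  qed
next
  fix a assume a: "a \<in> group_center G"
  have ac: "a \<in> carrier G" using center_carrier[OF a] by auto
  show "inv a \<in> group_center G"
  proof (rule center_memI)
    show "inv a \<in> carrier G" using ac by auto
    fix g assume g: "g \<in> carrier G"
    have ag: "a \<otimes> g = g \<otimes> a" using center_comm[OF a g] .
    have "inv a \<otimes> g = inv a \<otimes> (g \<otimes> a) \<otimes> inv a" using ac g by (simp add: m_assoc)
    also have "\<dots> = inv a \<otimes> (a \<otimes> g) \<otimes> inv a" using ag by simp
    also have "\<dots> = g \<otimes> inv a" using ac g by (simp add: m_assoc[symmetric])
    finally show "inv a \<otimes> g = g \<otimes> inv a" .
  qed
qed

lemma (in group) center_normal: "group_center G \<lhd> G"
  unfolding normal_inv_iff
proof (intro conjI ballI center_subgroup)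
  fix x h assume x: "x \<in> carrier G" and h: "h \<in> group_center G"
  have "x \<otimes> h \<otimes> inv x = h \<otimes> x \<otimes> inv x" using center_comm[OF h x] by simp
  also have "\<dots> = h" using x center_carrier[OF h] by (simp add: m_assoc)
  finally have "x \<otimes> h \<otimes> inv x = h" .
  then show "x \<otimes> h \<otimes> inv x \<in> group_center G" using h by simp
qed

lemma (in group) center_conj:
  assumes z: "z \<in> group_center G" and x: "x \<in> carrier G"
  shows "z \<otimes> x \<otimes> inv z = x"
proof -
  have "z \<otimes> x \<otimes> inv z = x \<otimes> z \<otimes> inv z" using center_comm[OF z x] by simp
  also have "\<dots> = x" using x center_carrier[OF z] by (simp add: m_assoc)
  finally show ?thesis .
qed

lemma (in group) center_prod:
  assumes z1: "z1 \<in> group_center G" and z2: "z2 \<in> group_center G"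
    and a: "a \<in> carrier G" and b: "b \<in> carrier G"
  shows "(z1 \<otimes> a) \<otimes> (z2 \<otimes> b) = (z1 \<otimes> z2) \<otimes> (a \<otimes> b)"
proof -
  have c: "z1 \<in> carrier G" "z2 \<in> carrier G" using center_carrier[OF z1] center_carrier[OF z2] by auto
  have "(z1 \<otimes> a) \<otimes> (z2 \<otimes> b) = z1 \<otimes> (a \<otimes> z2) \<otimes> b" using c a b by (simp add: m_assoc)
  also have "\<dots> = z1 \<otimes> (z2 \<otimes> a) \<otimes> b" using center_comm[OF z2 a] by simp
  also have "\<dots> = (z1 \<otimes> z2) \<otimes> (a \<otimes> b)" using c a b by (simp add: m_assoc)
  finally show ?thesis .
qed

lemma (in group) comm_central:
  assumes z1: "z1 \<in> group_center G" and z2: "z2 \<in> group_center G"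
    and a: "a \<in> carrier G" and b: "b \<in> carrier G"
  shows "(z1 \<otimes> a) \<otimes> (z2 \<otimes> b) \<otimes> inv (z1 \<otimes> a) \<otimes> inv (z2 \<otimes> b) = a \<otimes> b \<otimes> inv a \<otimes> inv b"
proof -
  have c: "z1 \<in> carrier G" "z2 \<in> carrier G" using center_carrier[OF z1] center_carrier[OF z2] by auto
  have w: "z1 \<otimes> z2 \<in> group_center G" using z1 z2 subgroup.m_closed[OF center_subgroup] by blast
  have wc: "z1 \<otimes> z2 \<in> carrier G" using c by auto
  have e1: "(z1 \<otimes> a) \<otimes> (z2 \<otimes> b) = (z1 \<otimes> z2) \<otimes> (a \<otimes> b)" by (rule center_prod[OF z1 z2 a b])
  have e2: "(z2 \<otimes> b) \<otimes> (z1 \<otimes> a) = (z1 \<otimes> z2) \<otimes> (b \<otimes> a)"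
    using center_prod[OF z2 z1 b a] center_comm[OF z1 c(2)] by simp
  have "inv (z1 \<otimes> a) \<otimes> inv (z2 \<otimes> b) = inv ((z2 \<otimes> b) \<otimes> (z1 \<otimes> a))"
    using c a b by (simp add: inv_mult_group)
  also have "\<dots> = inv (b \<otimes> a) \<otimes> inv (z1 \<otimes> z2)" using e2 wc a b by (simp add: inv_mult_group)
  finally have e3: "inv (z1 \<otimes> a) \<otimes> inv (z2 \<otimes> b) = inv (b \<otimes> a) \<otimes> inv (z1 \<otimes> z2)" .
  have "(z1 \<otimes> a) \<otimes> (z2 \<otimes> b) \<otimes> inv (z1 \<otimes> a) \<otimes> inv (z2 \<otimes> b)
      = ((z1 \<otimes> a) \<otimes> (z2 \<otimes> b)) \<otimes> (inv (z1 \<otimes> a) \<otimes> inv (z2 \<otimes> b))"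
    using c a b by (simp add: m_assoc)
  also have "\<dots> = (z1 \<otimes> z2) \<otimes> ((a \<otimes> b) \<otimes> inv (b \<otimes> a)) \<otimes> inv (z1 \<otimes> z2)"
    unfolding e1 e3 using wc a b by (simp add: m_assoc)
  also have "\<dots> = (a \<otimes> b) \<otimes> inv (b \<otimes> a)" using center_conj[OF w] a b by simp
  also have "\<dots> = a \<otimes> b \<otimes> inv a \<otimes> inv b" using a b by (simp add: inv_mult_group m_assoc)
  finally show ?thesis .
qed
lemma quasisimple_group: "quasisimple L \<Longrightarrow> group L"
  unfolding quasisimple_def perfect_group_def by auto

lemma quasisimple_perfect: "quasisimple L \<Longrightarrow> derived L (carrier L) = carrier L"
  unfolding quasisimple_def perfect_group_def by auto

lemma (in group) rcos_decomp:
  assumes H: "subgroup H G" and y: "y \<in> carrier G" and x: "x \<in> carrier G" and e: "H #> y = H #> x"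
  shows "\<exists>z\<in>H. y = z \<otimes> x"
proof -
  have "y \<in> H #> y" using rcos_self[OF y H] .
  then have "y \<in> H #> x" using e by simp
  then show ?thesis unfolding r_coset_def by auto
qed

lemma (in group) perfect_gen_subset:
  assumes perf: "derived G (carrier G) = carrier G" and N: "subgroup N G"
    and dec: "\<And>y. y \<in> carrier G \<Longrightarrow> \<exists>z\<in>group_center G. \<exists>x\<in>N. y = z \<otimes> x"
  shows "carrier G \<subseteq> N"
proof -
  have "derived_set G (carrier G) \<subseteq> N"
  proof
    fix c assume "c \<in> derived_set G (carrier G)"
    then obtain y1 y2 where y: "y1 \<in> carrier G" "y2 \<in> carrier G" and c: "c = y1 \<otimes> y2 \<otimes> inv y1 \<otimes> inv y2"
      by auto
    obtain z1 x1 where z1: "z1 \<in> group_center G" "x1 \<in> N" "y1 = z1 \<otimes> x1" using dec[OF y(1)] by blast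
    obtain z2 x2 where z2: "z2 \<in> group_center G" "x2 \<in> N" "y2 = z2 \<otimes> x2" using dec[OF y(2)] by blast
    have xc: "x1 \<in> carrier G" "x2 \<in> carrier G" using z1 z2 subgroup.mem_carrier[OF N] by auto
    have "c = x1 \<otimes> x2 \<otimes> inv x1 \<otimes> inv x2" unfolding c z1(3) z2(3)
      by (rule comm_central[OF z1(1) z2(1) xc])
    then show "c \<in> N" using z1(2) z2(2) N by (simp add: subgroup.m_closed subgroup.m_inv_closed)
  qed
  then have "derived G (carrier G) \<subseteq> N" unfolding derived_def by (rule generate_subgroup_incl[OF _ N])
  then show ?thesis using perf by simp
qed

lemma qs_normal:
  assumes q: "quasisimple L" and N: "N \<lhd> L" and nc: "\<not> N \<subseteq> group_center L"
  shows "N = carrier L"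
proof -
  interpret L: group L using quasisimple_group[OF q] .
  interpret Z: normal "group_center L" L using L.center_normal .
  have simp: "simple_group (L Mod group_center L)" using q unfolding quasisimple_def by auto
  have gh: "group_hom L (L Mod group_center L) (\<lambda>a. group_center L #>\<^bsub>L\<^esub> a)"
    unfolding group_hom_def group_hom_axioms_def
    using Z.r_coset_hom_Mod Z.factorgroup_is_group L.is_group by auto
  have sj: "(\<lambda>a. group_center L #>\<^bsub>L\<^esub> a) ` carrier L = carrier (L Mod group_center L)"
    by (simp add: carrier_FactGroup)
  have nn: "(\<lambda>a. group_center L #>\<^bsub>L\<^esub> a) ` N \<lhd> L Mod group_center L"
    using normal.surj_hom_normal_subgroup[OF N gh sj] .
  have Nsub: "N \<subseteq> carrier L" using N normal_imp_subgroup subgroup.subset by blast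
  from simple_group.no_real_normal_subgroup[OF simp nn]
  have cases: "(\<lambda>a. group_center L #>\<^bsub>L\<^esub> a) ` N = carrier (L Mod group_center L) \<or>
     (\<lambda>a. group_center L #>\<^bsub>L\<^esub> a) ` N = {group_center L}" by simp
  then show ?thesis
  proof
    assume "(\<lambda>a. group_center L #>\<^bsub>L\<^esub> a) ` N = {group_center L}"
    moreover obtain x where x: "x \<in> N" "x \<notin> group_center L" using nc by auto
    ultimately have "group_center L #>\<^bsub>L\<^esub> x = group_center L" by auto
    moreover have "x \<in> group_center L #>\<^bsub>L\<^esub> x" using L.rcos_self x(1) Nsub Z.subgroup_axioms by blast
    ultimately show ?thesis using x(2) by simp
  next
    assume all: "(\<lambda>a. group_center L #>\<^bsub>L\<^esub> a) ` N = carrier (L Mod group_center L)"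
    have dec: "\<exists>z\<in>group_center L. \<exists>x\<in>N. y = z \<otimes>\<^bsub>L\<^esub> x" if y: "y \<in> carrier L" for y
    proof -
      have "group_center L #>\<^bsub>L\<^esub> y \<in> carrier (L Mod group_center L)" using y sj by blast
      then obtain x where x: "x \<in> N" "group_center L #>\<^bsub>L\<^esub> y = group_center L #>\<^bsub>L\<^esub> x"
        using all by (metis imageE)
      then show ?thesis using L.rcos_decomp[OF Z.subgroup_axioms y _ x(2)] Nsub by blast
    qed
    have "carrier L \<subseteq> N"
      by (rule L.perfect_gen_subset[OF quasisimple_perfect[OF q] normal_imp_subgroup[OF N] dec])
    then show ?thesis using Nsub by blast
  qed
qed

lemma (in group) conj_center:
  assumes z: "z \<in> group_center G" and x: "x \<in> carrier G"
  shows "x \<otimes> z \<otimes> inv x = z"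
proof -
  have "x \<otimes> z \<otimes> inv x = z \<otimes> x \<otimes> inv x" using center_comm[OF z x] by simp
  also have "\<dots> = z" using x center_carrier[OF z] by (simp add: m_assoc)
  finally show ?thesis .
qed

lemma (in group) commutator_one:
  assumes a: "a \<in> carrier G" and b: "b \<in> carrier G" and e: "a \<otimes> b \<otimes> inv a \<otimes> inv b = \<one>"
  shows "a \<otimes> b = b \<otimes> a"
proof -
  have "a \<otimes> b = (a \<otimes> b \<otimes> inv a \<otimes> inv b) \<otimes> b \<otimes> a" using a b by (simp add: m_assoc)
  also have "\<dots> = b \<otimes> a" using e a b by simp
  finally show ?thesis .
qed

lemma qs_nontriv_center: "quasisimple L \<Longrightarrow> \<not> carrier L \<subseteq> group_center L"
proof
  assume q: "quasisimple L" and s: "carrier L \<subseteq> group_center L"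
  interpret L: group L using quasisimple_group[OF q] .
  have "derived_set L (carrier L) \<subseteq> {\<one>\<^bsub>L\<^esub>}"
  proof
    fix c assume "c \<in> derived_set L (carrier L)"
    then obtain a b where ab: "a \<in> carrier L" "b \<in> carrier L" "c = a \<otimes>\<^bsub>L\<^esub> b \<otimes>\<^bsub>L\<^esub> inv\<^bsub>L\<^esub> a \<otimes>\<^bsub>L\<^esub> inv\<^bsub>L\<^esub> b"
      by auto
    have "a \<otimes>\<^bsub>L\<^esub> b = b \<otimes>\<^bsub>L\<^esub> a" using center_comm[of a L b] s ab by auto
    then have "c = b \<otimes>\<^bsub>L\<^esub> a \<otimes>\<^bsub>L\<^esub> inv\<^bsub>L\<^esub> a \<otimes>\<^bsub>L\<^esub> inv\<^bsub>L\<^esub> b" using ab by simp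
    also have "\<dots> = \<one>\<^bsub>L\<^esub>" using ab by (simp add: L.m_assoc)
    finally show "c \<in> {\<one>\<^bsub>L\<^esub>}" by simp
  qed
  then have "derived L (carrier L) \<subseteq> {\<one>\<^bsub>L\<^esub>}"
    unfolding derived_def using L.generate_subgroup_incl L.triv_subgroup by blast
  then have triv: "carrier L = {\<one>\<^bsub>L\<^esub>}" using quasisimple_perfect[OF q] by auto
  interpret Z: normal "group_center L" L using L.center_normal .
  have "carrier (L Mod group_center L) = {group_center L #>\<^bsub>L\<^esub> \<one>\<^bsub>L\<^esub>}"
    using triv by (simp add: carrier_FactGroup)
  then have "Coset.order (L Mod group_center L) = 1" unfolding Coset.order_def by simp
  moreover have "simple_group (L Mod group_center L)" using q unfolding quasisimple_def by auto
  ultimately show False using simple_group.order_gt_one by fastforce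
qed

locale qsetup = group G for G :: "('a,'b) monoid_scheme" (structure) +
  fixes n :: nat and L :: "nat \<Rightarrow> ('c,'d) monoid_scheme" and p :: "nat \<Rightarrow> 'a \<Rightarrow> 'c"
  assumes perf: "derived G (carrier G) = carrier G"
  and homs: "\<And>i. i<n \<Longrightarrow> p i \<in> hom G (L i)"
  and surj: "\<And>i. i<n \<Longrightarrow> p i ` carrier G = carrier (L i)"
  and faith: "\<And>g. g \<in> carrier G \<Longrightarrow> (\<And>i. i<n \<Longrightarrow> p i g = \<one>\<^bsub>L i\<^esub>) \<Longrightarrow> g = \<one>\<^bsub>G\<^esub>"
  and qs: "\<And>i. i<n \<Longrightarrow> quasisimple (L i)"
begin

lemma Lgrp: "i < n \<Longrightarrow> group (L i)" using quasisimple_group[OF qs] .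

lemma gh: "i < n \<Longrightarrow> group_hom G (L i) (p i)"
  unfolding group_hom_def group_hom_axioms_def using Lgrp homs is_group by auto

definition NT :: "nat set \<Rightarrow> 'a set" where
  "NT T = {g \<in> carrier G. \<forall>k\<in>T. p k g \<in> group_center (L k)}"

lemma NT_anti: "T \<subseteq> T' \<Longrightarrow> NT T' \<subseteq> NT T" unfolding NT_def by auto

lemma NT_Un: "NT (A \<union> B) = NT A \<inter> NT B" unfolding NT_def by auto

lemma NT_empty: "NT {} = carrier G" unfolding NT_def by auto

lemma NT_normal: assumes T: "T \<subseteq> {..<n}" shows "NT T \<lhd> G"
  unfolding normal_inv_iff
proof (intro conjI ballI)
  show "subgroup (NT T) G"
  proof (rule subgroupI)
    show "NT T \<subseteq> carrier G" unfolding NT_def by auto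
    show "NT T \<noteq> {}"
    proof -
      have "\<one> \<in> NT T" unfolding NT_def
      proof (safe)
        fix k assume k: "k \<in> T"
        then have kn: "k < n" using T by auto
        interpret h: group_hom G "L k" "p k" using gh[OF kn] .
        show "p k \<one> \<in> group_center (L k)"
          using h.hom_one subgroup.one_closed[OF group.center_subgroup[OF Lgrp[OF kn]]] by simp
      qed simp
      then show ?thesis by auto
    qed
  next
    fix a assume a: "a \<in> NT T"
    show "inv a \<in> NT T" unfolding NT_def
    proof (safe)
      show "inv a \<in> carrier G" using a unfolding NT_def by auto
      fix k assume k: "k \<in> T"
      then have kn: "k < n" using T by auto
      interpret h: group_hom G "L k" "p k" using gh[OF kn] .
      have "p k a \<in> group_center (L k)" "a \<in> carrier G" using a k unfolding NT_def by auto
      then show "p k (inv a) \<in> group_center (L k)"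
        using h.hom_inv subgroup.m_inv_closed[OF group.center_subgroup[OF Lgrp[OF kn]]] by simp
    qed
  next
    fix a b assume a: "a \<in> NT T" and b: "b \<in> NT T"
    show "a \<otimes> b \<in> NT T" unfolding NT_def
    proof (safe)
      show "a \<otimes> b \<in> carrier G" using a b unfolding NT_def by auto
      fix k assume k: "k \<in> T"
      then have kn: "k < n" using T by auto
      interpret h: group_hom G "L k" "p k" using gh[OF kn] .
      have "p k a \<in> group_center (L k)" "a \<in> carrier G" "p k b \<in> group_center (L k)" "b \<in> carrier G"
        using a b k unfolding NT_def by auto
      then show "p k (a \<otimes> b) \<in> group_center (L k)"
        using subgroup.m_closed[OF group.center_subgroup[OF Lgrp[OF kn]]] by simp
    qed
  qed
next
  fix x h assume x: "x \<in> carrier G" and h: "h \<in> NT T"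
  show "x \<otimes> h \<otimes> inv x \<in> NT T" unfolding NT_def
  proof (safe)
    show "x \<otimes> h \<otimes> inv x \<in> carrier G" using x h unfolding NT_def by auto
    fix k assume k: "k \<in> T"
    then have kn: "k < n" using T by auto
    interpret h: group_hom G "L k" "p k" using gh[OF kn] .
    have hk: "p k h \<in> group_center (L k)" "h \<in> carrier G" using h k unfolding NT_def by auto
    have "p k (x \<otimes> h \<otimes> inv x) = p k x \<otimes>\<^bsub>L k\<^esub> p k h \<otimes>\<^bsub>L k\<^esub> inv\<^bsub>L k\<^esub> (p k x)"
      using x hk by simp
    also have "\<dots> = p k h" using group.conj_center[OF Lgrp[OF kn] hk(1)] x by simp
    finally show "p k (x \<otimes> h \<otimes> inv x) \<in> group_center (L k)" using hk by simp
  qed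
qed

lemma NT_all_center: "NT {..<n} \<subseteq> group_center G"
proof
  fix g assume g: "g \<in> NT {..<n}"
  have gc: "g \<in> carrier G" using g unfolding NT_def by auto
  show "g \<in> group_center G"
  proof (rule center_memI[OF gc])
    fix x assume x: "x \<in> carrier G"
    have "g \<otimes> x \<otimes> inv g \<otimes> inv x = \<one>"
    proof (rule faith)
      show "g \<otimes> x \<otimes> inv g \<otimes> inv x \<in> carrier G" using gc x by simp
      fix i assume i: "i < n"
      interpret h: group_hom G "L i" "p i" using gh[OF i] .
      have pc: "p i g \<in> group_center (L i)" using g i unfolding NT_def by auto
      have "p i (g \<otimes> x \<otimes> inv g \<otimes> inv x) = p i g \<otimes>\<^bsub>L i\<^esub> p i x \<otimes>\<^bsub>L i\<^esub> inv\<^bsub>L i\<^esub> (p i g) \<otimes>\<^bsub>L i\<^esub> inv\<^bsub>L i\<^esub> (p i x)"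
        using gc x by simp
      also have "\<dots> = p i x \<otimes>\<^bsub>L i\<^esub> inv\<^bsub>L i\<^esub> (p i x)"
        using group.center_conj[OF Lgrp[OF i] pc] x by simp
      also have "\<dots> = \<one>\<^bsub>L i\<^esub>" using x by simp
      finally show "p i (g \<otimes> x \<otimes> inv g \<otimes> inv x) = \<one>\<^bsub>L i\<^esub>" .
    qed
    then show "g \<otimes> x = x \<otimes> g" using commutator_one gc x by blast
  qed
qed

lemma center_in_NT: assumes T: "T \<subseteq> {..<n}" shows "group_center G \<subseteq> NT T"
proof
  fix z assume z: "z \<in> group_center G"
  have zc: "z \<in> carrier G" using center_carrier[OF z] .
  show "z \<in> NT T" unfolding NT_def
  proof (safe intro!: zc)
    fix k assume k: "k \<in> T"
    then have kn: "k < n" using T by auto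
    interpret h: group_hom G "L k" "p k" using gh[OF kn] .
    show "p k z \<in> group_center (L k)"
    proof (rule center_memI)
      show "p k z \<in> carrier (L k)" using zc by simp
      fix y assume "y \<in> carrier (L k)"
      then obtain x where x: "x \<in> carrier G" "y = p k x" using surj[OF kn] by auto
      show "p k z \<otimes>\<^bsub>L k\<^esub> y = y \<otimes>\<^bsub>L k\<^esub> p k z"
        using x zc center_comm[OF z x(1)] h.hom_mult by metis
    qed
  qed
qed

end

context qsetup begin
lemma exists_J: "\<exists>J. J \<subseteq> {..<n} \<and> NT J = NT {..<n} \<and> (\<forall>j\<in>J. NT (J - {j}) \<noteq> NT {..<n})"
proof -
  let ?P = "\<lambda>k. \<exists>J. J \<subseteq> {..<n} \<and> NT J = NT {..<n} \<and> card J = k"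
  have ex: "?P (card {..<n})" by blast
  define k where "k = (LEAST k. ?P k)"
  have Pk: "?P k" unfolding k_def by (rule LeastI[of ?P, OF ex])
  then obtain J where J: "J \<subseteq> {..<n}" "NT J = NT {..<n}" "card J = k" by blast
  have "\<forall>j\<in>J. NT (J - {j}) \<noteq> NT {..<n}"
  proof (intro ballI notI)
    fix j assume j: "j \<in> J" and e: "NT (J - {j}) = NT {..<n}"
    have fin: "finite J" using J(1) finite_subset by blast
    have "card (J - {j}) < k" using J(3) j fin card_gt_0_iff[of J] by auto
    moreover have "?P (card (J - {j}))" using J(1) e by blast
    ultimately show False unfolding k_def using not_less_Least by blast
  qed
  then show ?thesis using J by blast
qed
end

locale qsetup2 = qsetup +
  fixes J :: "nat set"
  assumes J_sub: "J \<subseteq> {..<n}" and J_eq: "NT J = NT {..<n}"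
    and J_min: "\<And>j. j \<in> J \<Longrightarrow> NT (J - {j}) \<noteq> NT {..<n}"
begin

definition M :: "nat \<Rightarrow> 'a set" where "M j = NT (J - {j})"
definition H :: "nat \<Rightarrow> 'a set" where "H j = derived G (M j)"

lemma NTJ_center: "NT J \<subseteq> group_center G" using J_eq NT_all_center by simp

lemma M_normal: "M j \<lhd> G" unfolding M_def by (rule NT_normal) (use J_sub in blast)

lemma M_subgroup: "subgroup (M j) G" using M_normal normal_imp_subgroup by blast

lemma M_carrier: "M j \<subseteq> carrier G" unfolding M_def NT_def by auto

lemma H_normal: "H j \<lhd> G" unfolding H_def using derived_is_normal[OF M_normal] .

lemma H_subgroup: "subgroup (H j) G" using H_normal normal_imp_subgroup by blast

lemma H_sub_M: "H j \<subseteq> M j" unfolding H_def using derived_incl[OF _ M_subgroup] by blast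

lemma H_carrier: "H j \<subseteq> carrier G" using H_sub_M M_carrier by blast

lemma pM: assumes j: "j \<in> J" shows "p j ` M j = carrier (L j)"
proof -
  have jn: "j < n" using j J_sub by auto
  have "NT J \<subseteq> NT (J - {j})" by (rule NT_anti) auto
  moreover have "NT (J - {j}) \<noteq> NT J" using J_min[OF j] J_eq by simp
  ultimately obtain m where m: "m \<in> M j" "m \<notin> NT J" unfolding M_def by blast
  have "p j m \<notin> group_center (L j)"
  proof
    assume "p j m \<in> group_center (L j)"
    then have "m \<in> NT (J - {j} \<union> {j})" using m(1) unfolding M_def NT_def by auto
    moreover have "J - {j} \<union> {j} = J" using j by auto
    ultimately show False using m(2) by simp
  qed
  then have nc: "\<not> p j ` M j \<subseteq> group_center (L j)" using m(1) by blast
  have "p j ` M j \<lhd> L j"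
    using normal.surj_hom_normal_subgroup[OF M_normal gh[OF jn] surj[OF jn]] .
  then show ?thesis using qs_normal[OF qs[OF jn] _ nc] by blast
qed

lemma pH: assumes j: "j \<in> J" shows "p j ` H j = carrier (L j)"
proof -
  have jn: "j < n" using j J_sub by auto
  have "p j ` H j = derived (L j) (p j ` M j)"
    unfolding H_def using group_hom.derived_img[OF gh[OF jn] M_carrier] by simp
  also have "\<dots> = carrier (L j)" using pM[OF j] quasisimple_perfect[OF qs[OF jn]] by simp
  finally show ?thesis .
qed

lemma Mdec: assumes j: "j \<in> J" and m: "m \<in> M j"
  shows "\<exists>z\<in>group_center G. \<exists>h\<in>H j. m = z \<otimes> h"
proof -
  have jn: "j < n" using j J_sub by auto
  interpret h: group_hom G "L j" "p j" using gh[OF jn] .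
  have mc: "m \<in> carrier G" using m M_carrier by blast
  obtain h where h: "h \<in> H j" "p j h = p j m" using pH[OF j] mc by (metis h.hom_closed image_iff)
  have hc: "h \<in> carrier G" "h \<in> M j" using h(1) H_carrier H_sub_M by blast+
  define z where "z = m \<otimes> inv h"
  have zM: "z \<in> M j" unfolding z_def using m hc(2) M_subgroup
    by (simp add: subgroup.m_closed subgroup.m_inv_closed)
  have "p j z = \<one>\<^bsub>L j\<^esub>" unfolding z_def using h(2) mc hc by simp
  then have "p j z \<in> group_center (L j)"
    using subgroup.one_closed[OF group.center_subgroup[OF Lgrp[OF jn]]] by simp
  then have "z \<in> NT (J - {j} \<union> {j})" using zM unfolding M_def NT_def by auto
  moreover have "J - {j} \<union> {j} = J" using j by auto
  ultimately have "z \<in> group_center G" using NTJ_center by auto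
  moreover have "m = z \<otimes> h" unfolding z_def using mc hc by (simp add: m_assoc)
  ultimately show ?thesis using h(1) by blast
qed

lemma H_perfect: assumes j: "j \<in> J" shows "derived G (H j) = H j"
proof
  show "derived G (H j) \<subseteq> H j" using derived_incl[OF _ H_subgroup] by blast
next
  have "derived_set G (M j) \<subseteq> derived_set G (H j)"
  proof
    fix c assume "c \<in> derived_set G (M j)"
    then obtain a b where ab: "a \<in> M j" "b \<in> M j" "c = a \<otimes> b \<otimes> inv a \<otimes> inv b" by auto
    obtain z1 h1 where 1: "z1 \<in> group_center G" "h1 \<in> H j" "a = z1 \<otimes> h1" using Mdec[OF j ab(1)] by blast
    obtain z2 h2 where 2: "z2 \<in> group_center G" "h2 \<in> H j" "b = z2 \<otimes> h2" using Mdec[OF j ab(2)] by blast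
    have hc: "h1 \<in> carrier G" "h2 \<in> carrier G" using 1(2) 2(2) H_carrier by blast+
    have "c = h1 \<otimes> h2 \<otimes> inv h1 \<otimes> inv h2" unfolding ab(3) 1(3) 2(3)
      by (rule comm_central[OF 1(1) 2(1) hc])
    then show "c \<in> derived_set G (H j)" using 1(2) 2(2) by blast
  qed
  also have "\<dots> \<subseteq> derived G (H j)" unfolding derived_def by (blast intro: generate.incl)
  finally have "generate G (derived_set G (M j)) \<subseteq> derived G (H j)"
    using generate_subgroup_incl[OF _ derived_is_subgroup[OF H_carrier]] by blast
  then show "H j \<subseteq> derived G (H j)" unfolding H_def derived_def by simp
qed

end

lemma (in group) centralizer_subgroup:
  assumes y: "y \<in> carrier G" shows "subgroup {x \<in> carrier G. y \<otimes> x = x \<otimes> y} G"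
proof (rule subgroupI)
  show "{x \<in> carrier G. y \<otimes> x = x \<otimes> y} \<subseteq> carrier G" by blast
  show "{x \<in> carrier G. y \<otimes> x = x \<otimes> y} \<noteq> {}" using y by auto
next
  fix a b assume a: "a \<in> {x \<in> carrier G. y \<otimes> x = x \<otimes> y}" and b: "b \<in> {x \<in> carrier G. y \<otimes> x = x \<otimes> y}"
  have ac: "a \<in> carrier G" "b \<in> carrier G" "y \<otimes> a = a \<otimes> y" "y \<otimes> b = b \<otimes> y" using a b by auto
  have "y \<otimes> (a \<otimes> b) = (y \<otimes> a) \<otimes> b" using ac(1,2) y by (simp add: m_assoc)
  also have "\<dots> = a \<otimes> (y \<otimes> b)" using ac y by (simp add: m_assoc)
  also have "\<dots> = (a \<otimes> b) \<otimes> y" using ac y by (simp add: m_assoc)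
  finally have e: "y \<otimes> (a \<otimes> b) = (a \<otimes> b) \<otimes> y" .
  then show "a \<otimes> b \<in> {x \<in> carrier G. y \<otimes> x = x \<otimes> y}" using ac(1,2) by simp
next
  fix a assume a: "a \<in> {x \<in> carrier G. y \<otimes> x = x \<otimes> y}"
  have ac: "a \<in> carrier G" "a \<otimes> y = y \<otimes> a" using a by auto
  have "y \<otimes> inv a = inv a \<otimes> (a \<otimes> y) \<otimes> inv a" using ac(1) y by (simp add: m_assoc[symmetric])
  also have "\<dots> = inv a \<otimes> (y \<otimes> a) \<otimes> inv a" using ac by simp
  also have "\<dots> = inv a \<otimes> y" using ac y by (simp add: m_assoc)
  finally have e: "y \<otimes> inv a = inv a \<otimes> y" .
  then show "inv a \<in> {x \<in> carrier G. y \<otimes> x = x \<otimes> y}" using ac(1) by simp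
qed

lemma (in group) conj_commutator:
  assumes g: "g \<in> carrier G" and h1: "h1 \<in> carrier G" and h2: "h2 \<in> carrier G"
  shows "g \<otimes> (h1 \<otimes> h2 \<otimes> inv h1 \<otimes> inv h2) \<otimes> inv g =
    (g \<otimes> h1 \<otimes> inv g) \<otimes> (g \<otimes> h2 \<otimes> inv g) \<otimes> inv (g \<otimes> h1 \<otimes> inv g) \<otimes> inv (g \<otimes> h2 \<otimes> inv g)"
proof -
  note in_carrier = g h1 h2
  have "g \<otimes> (h1 \<otimes> h2 \<otimes> inv h1 \<otimes> inv h2) \<otimes> inv g =
         g \<otimes> h1 \<otimes> (inv g \<otimes> g) \<otimes> h2 \<otimes> (inv g \<otimes> g) \<otimes> inv h1 \<otimes> (inv g \<otimes> g) \<otimes> inv h2 \<otimes> inv g"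
    by (simp add: in_carrier m_assoc)
  also have " ... =
        (g \<otimes> h1 \<otimes> inv g) \<otimes> (g \<otimes> h2 \<otimes> inv g) \<otimes> (g \<otimes> inv h1 \<otimes> inv g) \<otimes> (g \<otimes> inv h2 \<otimes> inv g)"
    using in_carrier m_assoc inv_closed m_closed by presburger
  finally show ?thesis
    by (simp add: in_carrier inv_mult_group m_assoc)
qed

lemma (in normal) rcos_eq_self_iff:
  assumes a: "a \<in> carrier G" shows "H #> a = H \<longleftrightarrow> a \<in> H"
proof
  assume "H #> a = H"
  moreover have "a \<in> H #> a" using rcos_self[OF a subgroup_axioms] .
  ultimately show "a \<in> H" by simp
next
  assume "a \<in> H" then show "H #> a = H" using rcos_const[OF is_group] by blast
qed

context qsetup2 begin

lemma MM_center: assumes j: "j \<in> J" and k: "k \<in> J" and jk: "j \<noteq> k"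
  shows "M j \<inter> M k \<subseteq> group_center G"
proof -
  have "M j \<inter> M k = NT ((J - {j}) \<union> (J - {k}))" unfolding M_def NT_Un ..
  also have "(J - {j}) \<union> (J - {k}) = J" using jk by auto
  finally show ?thesis using NTJ_center by simp
qed

lemma H_commute: assumes j: "j \<in> J" and k: "k \<in> J" and jk: "j \<noteq> k"
  and x: "x \<in> H j" and y: "y \<in> H k"
  shows "x \<otimes> y = y \<otimes> x"
proof -
  interpret Mj: normal "M j" G using M_normal .
  interpret Mk: normal "M k" G using M_normal .
  have yM: "y \<in> M k" using y H_sub_M by blast
  have yc: "y \<in> carrier G" using yM M_carrier by blast
  have conj: "\<exists>w\<in>group_center G. y \<otimes> a \<otimes> inv y = w \<otimes> a" if a: "a \<in> M j" for a
  proof -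
    have ac: "a \<in> carrier G" using a M_carrier by blast
    define w where "w = y \<otimes> a \<otimes> inv y \<otimes> inv a"
    have "y \<otimes> a \<otimes> inv y \<in> M j" using Mj.inv_op_closed2[OF yc a] .
    then have w1: "w \<in> M j" unfolding w_def using a Mj.m_closed Mj.m_inv_closed by blast
    have "a \<otimes> inv y \<otimes> inv a \<in> M k" using Mk.inv_op_closed2[OF ac Mk.m_inv_closed[OF yM]] .
    then have "y \<otimes> (a \<otimes> inv y \<otimes> inv a) \<in> M k" using yM Mk.m_closed by blast
    then have w2: "w \<in> M k" unfolding w_def using yc ac by (simp add: m_assoc)
    have "w \<in> group_center G" using w1 w2 MM_center[OF j k jk] by blast
    moreover have "y \<otimes> a \<otimes> inv y = w \<otimes> a" unfolding w_def using yc ac by (simp add: m_assoc)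
    ultimately show ?thesis by blast
  qed
  have "derived_set G (M j) \<subseteq> {x \<in> carrier G. y \<otimes> x = x \<otimes> y}"
  proof
    fix c assume "c \<in> derived_set G (M j)"
    then obtain a b where ab: "a \<in> M j" "b \<in> M j" "c = a \<otimes> b \<otimes> inv a \<otimes> inv b" by auto
    have abc: "a \<in> carrier G" "b \<in> carrier G" using ab M_carrier by blast+
    obtain w1 where w1: "w1 \<in> group_center G" "y \<otimes> a \<otimes> inv y = w1 \<otimes> a" using conj[OF ab(1)] by blast
    obtain w2 where w2: "w2 \<in> group_center G" "y \<otimes> b \<otimes> inv y = w2 \<otimes> b" using conj[OF ab(2)] by blast
    have "y \<otimes> c \<otimes> inv y = (w1 \<otimes> a) \<otimes> (w2 \<otimes> b) \<otimes> inv (w1 \<otimes> a) \<otimes> inv (w2 \<otimes> b)"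
      unfolding ab(3) conj_commutator[OF yc abc] w1(2) w2(2) ..
    also have "\<dots> = c" unfolding ab(3) by (rule comm_central[OF w1(1) w2(1) abc])
    finally have e: "y \<otimes> c \<otimes> inv y = c" .
    have cc: "c \<in> carrier G" using ab abc by simp
    have "y \<otimes> c = (y \<otimes> c \<otimes> inv y) \<otimes> y" using yc cc by (simp add: m_assoc)
    then have "y \<otimes> c = c \<otimes> y" using e by simp
    then show "c \<in> {x \<in> carrier G. y \<otimes> x = x \<otimes> y}" using cc by simp
  qed
  then have "H j \<subseteq> {x \<in> carrier G. y \<otimes> x = x \<otimes> y}"
    unfolding H_def derived_def by (rule generate_subgroup_incl[OF _ centralizer_subgroup[OF yc]])
  then show ?thesis using x by auto
qed

lemma gen_all: "generate G (\<Union>j\<in>J. H j) = carrier G"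
proof -
  let ?P = "generate G (\<Union>j\<in>J. H j)"
  have Usub: "(\<Union>j\<in>J. H j) \<subseteq> carrier G" using H_carrier by blast
  have Psub: "subgroup ?P G" using generate_is_subgroup[OF Usub] .
  have claim: "finite T \<Longrightarrow> T \<subseteq> J \<Longrightarrow> \<forall>g\<in>carrier G. \<exists>q\<in>?P. g \<otimes> inv q \<in> NT T" for T
  proof (induction T rule: finite_induct)
    case empty
    show ?case using NT_empty subgroup.one_closed[OF Psub] by force
  next
    case (insert j T)
    have j: "j \<in> J" and TJ: "T \<subseteq> J" using insert.prems by auto
    have jn: "j < n" using j J_sub by auto
    interpret h: group_hom G "L j" "p j" using gh[OF jn] .
    show ?case
    proof
      fix g assume g: "g \<in> carrier G"
      obtain q where q: "q \<in> ?P" "g \<otimes> inv q \<in> NT T" using insert.IH[OF TJ] g by blast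
      have qc: "q \<in> carrier G" using q(1) subgroup.mem_carrier[OF Psub] by blast
      define x where "x = g \<otimes> inv q"
      have xc: "x \<in> carrier G" unfolding x_def using g qc by simp
      obtain h where h: "h \<in> H j" "p j h = p j x" using pH[OF j] xc by (metis h.hom_closed image_iff)
      have hc: "h \<in> carrier G" using h(1) H_carrier by blast
      have hP: "h \<in> ?P" using h(1) j by (blast intro: generate.incl)
      have hqP: "h \<otimes> q \<in> ?P" using hP q(1) subgroup.m_closed[OF Psub] by blast
      have eq: "g \<otimes> inv (h \<otimes> q) = x \<otimes> inv h" unfolding x_def using g hc qc
        by (simp add: inv_mult_group m_assoc)
      have "x \<otimes> inv h \<in> NT (insert j T)" unfolding NT_def
      proof (safe)
        show "x \<otimes> inv h \<in> carrier G" using xc hc by simp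
      next
        show "p j (x \<otimes> inv h) \<in> group_center (L j)"
          using h(2) xc hc subgroup.one_closed[OF group.center_subgroup[OF Lgrp[OF jn]]] by simp
      next
        fix k assume k: "k \<in> T"
        have kn: "k < n" using k TJ J_sub by auto
        have kj: "k \<in> J - {j}" using k TJ insert.hyps by auto
        interpret hk: group_hom G "L k" "p k" using gh[OF kn] .
        have c1: "p k x \<in> group_center (L k)" using q(2) k unfolding x_def NT_def by auto
        have "h \<in> M j" using h(1) H_sub_M by blast
        then have c2: "p k h \<in> group_center (L k)" using kj unfolding M_def NT_def by auto
        have "p k (x \<otimes> inv h) = p k x \<otimes>\<^bsub>L k\<^esub> inv\<^bsub>L k\<^esub> (p k h)" using xc hc by simp
        then show "p k (x \<otimes> inv h) \<in> group_center (L k)"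
          using c1 c2 group.center_subgroup[OF Lgrp[OF kn]]
          by (simp add: subgroup.m_closed subgroup.m_inv_closed)
      qed
      then show "\<exists>q\<in>?P. g \<otimes> inv q \<in> NT (insert j T)" using hqP eq by metis
    qed
  qed
  have finJ: "finite J" using J_sub finite_subset by blast
  have dec: "\<exists>z\<in>group_center G. \<exists>x\<in>?P. y = z \<otimes> x" if y: "y \<in> carrier G" for y
  proof -
    obtain q where q: "q \<in> ?P" "y \<otimes> inv q \<in> NT J" using claim[OF finJ subset_refl] y by blast
    have qc: "q \<in> carrier G" using q(1) subgroup.mem_carrier[OF Psub] by blast
    have "y \<otimes> inv q \<in> group_center G" using q(2) NTJ_center by blast
    moreover have "y = (y \<otimes> inv q) \<otimes> q" using y qc by (simp add: m_assoc)
    ultimately show ?thesis using q(1) by blast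
  qed
  have "carrier G \<subseteq> ?P" by (rule perfect_gen_subset[OF perf Psub dec])
  then show ?thesis using subgroup.subset[OF Psub] by blast
qed

end

context qsetup2 begin

lemma H_center: assumes j: "j \<in> J"
  shows "group_center (G\<lparr>carrier := H j\<rparr>) = {h \<in> H j. p j h \<in> group_center (L j)}"
proof -
  have jn: "j < n" using j J_sub by auto
  interpret h: group_hom G "L j" "p j" using gh[OF jn] .
  show ?thesis
  proof (intro equalityI subsetI)
    fix h assume "h \<in> group_center (G\<lparr>carrier := H j\<rparr>)"
    then have h: "h \<in> H j" "\<And>g. g \<in> H j \<Longrightarrow> h \<otimes> g = g \<otimes> h" unfolding group_center_def by auto
    have hc: "h \<in> carrier G" using h(1) H_carrier by blast
    have "p j h \<in> group_center (L j)"
    proof (rule center_memI)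
      show "p j h \<in> carrier (L j)" using hc by simp
      fix y assume "y \<in> carrier (L j)"
      then obtain g where g: "g \<in> H j" "y = p j g" using pH[OF j] by (metis imageE)
      have gc: "g \<in> carrier G" using g(1) H_carrier by blast
      show "p j h \<otimes>\<^bsub>L j\<^esub> y = y \<otimes>\<^bsub>L j\<^esub> p j h"
        unfolding g(2) using h(2)[OF g(1)] hc gc h.hom_mult by metis
    qed
    then show "h \<in> {h \<in> H j. p j h \<in> group_center (L j)}" using h(1) by blast
  next
    fix h assume h: "h \<in> {h \<in> H j. p j h \<in> group_center (L j)}"
    then have hM: "h \<in> M j" using H_sub_M by blast
    have "h \<in> NT (J - {j} \<union> {j})" using hM h unfolding M_def NT_def by auto
    moreover have "J - {j} \<union> {j} = J" using j by auto
    ultimately have hz: "h \<in> group_center G" using NTJ_center by auto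
    show "h \<in> group_center (G\<lparr>carrier := H j\<rparr>)" unfolding group_center_def
      using h center_comm[OF hz] H_carrier by auto
  qed
qed

lemma H_cover: assumes j: "j \<in> J"
  shows "quasisimple_cover_of (G\<lparr>carrier := H j\<rparr>) (L j Mod group_center (L j))"
proof -
  have jn: "j < n" using j J_sub by auto
  interpret h: group_hom G "L j" "p j" using gh[OF jn] .
  interpret LL: group "L j" using Lgrp[OF jn] .
  interpret Z: normal "group_center (L j)" "L j" using group.center_normal[OF Lgrp[OF jn]] .
  define Hg where "Hg = G\<lparr>carrier := H j\<rparr>"
  interpret Hg: group Hg unfolding Hg_def using subgroup_imp_group[OF H_subgroup] .
  interpret ZH: normal "group_center Hg" Hg using Hg.center_normal .
  define f where "f = (\<lambda>h. group_center (L j) #>\<^bsub>L j\<^esub> p j h)"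
  have fhom: "f \<in> hom Hg (L j Mod group_center (L j))"
  proof (rule homI)
    fix x assume x: "x \<in> carrier Hg"
    then have "x \<in> carrier G" unfolding Hg_def using H_carrier by auto
    then show "f x \<in> carrier (L j Mod group_center (L j))" unfolding f_def
      by (simp add: carrier_FactGroup)
  next
    fix x y assume x: "x \<in> carrier Hg" and y: "y \<in> carrier Hg"
    then have xy: "x \<in> carrier G" "y \<in> carrier G" unfolding Hg_def using H_carrier by auto
    show "f (x \<otimes>\<^bsub>Hg\<^esub> y) = f x \<otimes>\<^bsub>L j Mod group_center (L j)\<^esub> f y"
      unfolding f_def Hg_def using xy by (simp add: Z.rcos_sum)
  qed
  interpret fh: group_hom Hg "L j Mod group_center (L j)" f
    unfolding group_hom_def group_hom_axioms_def using Hg.is_group Z.factorgroup_is_group fhom by auto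
  have fsurj: "f ` carrier Hg = carrier (L j Mod group_center (L j))"
  proof -
    have "f ` carrier Hg = (\<lambda>a. group_center (L j) #>\<^bsub>L j\<^esub> a) ` (p j ` H j)"
      unfolding f_def Hg_def by (simp add: image_image)
    also have "\<dots> = carrier (L j Mod group_center (L j))" using pH[OF j] by (simp add: carrier_FactGroup)
    finally show ?thesis .
  qed
  have ker: "kernel Hg (L j Mod group_center (L j)) f = group_center Hg"
  proof -
    have "kernel Hg (L j Mod group_center (L j)) f = {h \<in> H j. p j h \<in> group_center (L j)}"
    proof -
      have "\<forall>x\<in>H j. (group_center (L j) #>\<^bsub>L j\<^esub> p j x = group_center (L j)) \<longleftrightarrow> p j x \<in> group_center (L j)"
        using Z.rcos_eq_self_iff H_carrier h.hom_closed by blast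
      then show ?thesis unfolding kernel_def f_def Hg_def by auto
    qed
    also have "\<dots> = group_center Hg" unfolding Hg_def using H_center[OF j] by simp
    finally show ?thesis .
  qed
  have iso: "(Hg Mod group_center Hg) \<cong> (L j Mod group_center (L j))"
    using fh.FactGroup_iso[OF fsurj] ker by simp
  have perfH: "perfect_group Hg"
    unfolding perfect_group_def Hg_def
    using subgroup_imp_group[OF H_subgroup] derived_consistent[OF subset_refl H_subgroup] H_perfect[OF j]
    by simp
  have simpL: "simple_group (L j Mod group_center (L j))" using qs[OF jn] unfolding quasisimple_def by auto
  have "(L j Mod group_center (L j)) \<cong> (Hg Mod group_center Hg)"
    using group.iso_sym[OF ZH.factorgroup_is_group iso] .
  then obtain \<phi> where "\<phi> \<in> iso (L j Mod group_center (L j)) (Hg Mod group_center Hg)" unfolding is_iso_def by blast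
  then have "simple_group (Hg Mod group_center Hg)"
    using simple_group.iso_simple[OF simpL ZH.factorgroup_is_group] by blast
  then show ?thesis unfolding quasisimple_cover_of_def quasisimple_def Hg_def[symmetric]
    using perfH iso by simp
qed

lemma part1: "internal_central_product G J H \<and>
   (\<forall>j\<in>J. quasisimple_cover_of (G\<lparr>carrier := H j\<rparr>) (L j Mod group_center (L j)))"
  unfolding internal_central_product_def using H_subgroup H_commute gen_all H_cover by blast

end

context qsetup2 begin

definition X :: "nat \<Rightarrow> nat set" where "X j = {i. i < n \<and> p i ` H j = carrier (L i)}"

lemma P1: "j \<in> J \<Longrightarrow> j \<in> X j" unfolding X_def using pH J_sub by auto

lemma P2: assumes i: "i < n" and j: "j \<in> J" and nx: "i \<notin> X j"
  shows "p i ` H j \<subseteq> group_center (L i)"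
proof (rule ccontr)
  assume nc: "\<not> p i ` H j \<subseteq> group_center (L i)"
  have "p i ` H j \<lhd> L i" using normal.surj_hom_normal_subgroup[OF H_normal gh[OF i] surj[OF i]] .
  then have "p i ` H j = carrier (L i)" using qs_normal[OF qs[OF i] _ nc] by blast
  then show False using nx i unfolding X_def by auto
qed

lemma P4: assumes i: "i < n" and j: "j \<in> J" and k: "k \<in> J" and ij: "i \<in> X j" and ik: "i \<in> X k"
  shows "j = k"
proof (rule ccontr)
  assume jk: "j \<noteq> k"
  interpret h: group_hom G "L i" "p i" using gh[OF i] .
  have "carrier (L i) \<subseteq> group_center (L i)"
  proof
    fix y assume "y \<in> carrier (L i)"
    moreover have "p i ` H j = carrier (L i)" using ij unfolding X_def by simp
    ultimately obtain x where x: "x \<in> H j" "y = p i x" by blast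
    have xc: "x \<in> carrier G" using x(1) H_carrier by blast
    show "y \<in> group_center (L i)"
    proof (rule center_memI)
      show "y \<in> carrier (L i)" using x xc by simp
      fix y' assume "y' \<in> carrier (L i)"
      moreover have "p i ` H k = carrier (L i)" using ik unfolding X_def by simp
      ultimately obtain x' where x': "x' \<in> H k" "y' = p i x'" by blast
      have xc': "x' \<in> carrier G" using x'(1) H_carrier by blast
      show "y \<otimes>\<^bsub>L i\<^esub> y' = y' \<otimes>\<^bsub>L i\<^esub> y"
      proof -
        have "p i x \<otimes>\<^bsub>L i\<^esub> p i x' = p i (x \<otimes> x')" using xc xc' by simp
        also have "\<dots> = p i (x' \<otimes> x)" using H_commute[OF j k jk x(1) x'(1)] by simp
        also have "\<dots> = p i x' \<otimes>\<^bsub>L i\<^esub> p i x" using xc xc' by simp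
        finally show ?thesis unfolding x(2) x'(2) .
      qed
    qed
  qed
  then show False using qs_nontriv_center[OF qs[OF i]] by blast
qed

lemma P3: assumes i: "i < n" shows "\<exists>j\<in>J. i \<in> X j"
proof (rule ccontr)
  assume "\<not> (\<exists>j\<in>J. i \<in> X j)"
  then have allc: "\<And>j. j \<in> J \<Longrightarrow> p i ` H j \<subseteq> group_center (L i)" using P2[OF i] by blast
  then have allc2: "p i ` (\<Union>j\<in>J. H j) \<subseteq> group_center (L i)" by blast
  interpret h: group_hom G "L i" "p i" using gh[OF i] .
  have Usub: "(\<Union>j\<in>J. H j) \<subseteq> carrier G" using H_carrier by blast
  have "carrier (L i) = p i ` generate G (\<Union>j\<in>J. H j)" using surj[OF i] gen_all by simp
  also have "\<dots> = generate (L i) (p i ` (\<Union>j\<in>J. H j))" using h.generate_img[OF Usub] by simp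
  also have "\<dots> \<subseteq> group_center (L i)"
    by (rule group.generate_subgroup_incl[OF Lgrp[OF i] allc2 group.center_subgroup[OF Lgrp[OF i]]])
  finally show False using qs_nontriv_center[OF qs[OF i]] by blast
qed

definition goodT :: "('a) \<Rightarrow> (nat \<Rightarrow> 'a) \<Rightarrow> nat set \<Rightarrow> nat \<Rightarrow> 'c \<Rightarrow> bool" where
  "goodT g hh T i c \<longleftrightarrow> (\<exists>j\<in>T. i \<in> X j \<and> p i g = p i (hh j) \<otimes>\<^bsub>L i\<^esub> c) \<or> ((\<forall>j\<in>T. i \<notin> X j) \<and> p i g = c)"

lemma combine:
  assumes hh: "\<And>j. j \<in> J \<Longrightarrow> hh j \<in> H j"
  shows "\<exists>g\<in>carrier G. \<forall>i<n. \<exists>j\<in>J. i \<in> X j \<and> (\<exists>c\<in>group_center (L i). p i g = p i (hh j) \<otimes>\<^bsub>L i\<^esub> c)"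
proof -
  have claim: "finite T \<Longrightarrow> T \<subseteq> J \<Longrightarrow> \<exists>g\<in>carrier G. \<forall>i<n. \<exists>c\<in>group_center (L i). goodT g hh T i c" for T
  proof (induction T rule: finite_induct)
    case empty
    show ?case
    proof (intro bexI[of _ \<one>] allI impI)
      fix i assume i: "i < n"
      interpret h: group_hom G "L i" "p i" using gh[OF i] .
      have "goodT \<one> hh {} i \<one>\<^bsub>L i\<^esub>" unfolding goodT_def by simp
      then show "\<exists>c\<in>group_center (L i). goodT \<one> hh {} i c"
        using subgroup.one_closed[OF group.center_subgroup[OF Lgrp[OF i]]] by (intro bexI)
    qed simp
  next
    case (insert j T)
    have j: "j \<in> J" and TJ: "T \<subseteq> J" using insert.prems by auto
    obtain g where g: "g \<in> carrier G" and gp: "\<forall>i<n. \<exists>c\<in>group_center (L i). goodT g hh T i c"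
      using insert.IH[OF TJ] by (elim bexE)
    have hj: "hh j \<in> carrier G" using hh[OF j] H_carrier by blast
    show ?case
    proof (intro bexI[of _ "g \<otimes> hh j"] allI impI)
      show "g \<otimes> hh j \<in> carrier G" using g hj by simp
      fix i assume i: "i < n"
      interpret h: group_hom G "L i" "p i" using gh[OF i] .
      interpret LZ: subgroup "group_center (L i)" "L i" using group.center_subgroup[OF Lgrp[OF i]] .
      have pm: "p i (g \<otimes> hh j) = p i g \<otimes>\<^bsub>L i\<^esub> p i (hh j)" using g hj by simp
      obtain c where c: "c \<in> group_center (L i)" and cc: "goodT g hh T i c"
        using gp[rule_format, OF i] by (elim bexE)
      have cC: "c \<in> carrier (L i)" using center_carrier[OF c] .
      from cc[unfolded goodT_def]
      show "\<exists>c\<in>group_center (L i). goodT (g \<otimes> hh j) hh (insert j T) i c"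
      proof (elim disjE conjE)
        assume "\<exists>k\<in>T. i \<in> X k \<and> p i g = p i (hh k) \<otimes>\<^bsub>L i\<^esub> c"
        then obtain k where k: "k \<in> T" "i \<in> X k" "p i g = p i (hh k) \<otimes>\<^bsub>L i\<^esub> c" by (elim bexE conjE)
        have kJ: "k \<in> J" using k TJ by auto
        have "k \<noteq> j" using k insert.hyps by auto
        then have "i \<notin> X j" using P4[OF i kJ j k(2)] by auto
        then have z: "p i (hh j) \<in> group_center (L i)" using P2[OF i j] hh[OF j] by blast
        have hk: "hh k \<in> carrier G" using hh[OF kJ] H_carrier by blast
        have eq: "p i (g \<otimes> hh j) = p i (hh k) \<otimes>\<^bsub>L i\<^esub> (c \<otimes>\<^bsub>L i\<^esub> p i (hh j))"
          using pm k(3) hk hj cC by (simp add: h.H.m_assoc)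
        have c2: "c \<otimes>\<^bsub>L i\<^esub> p i (hh j) \<in> group_center (L i)" using c z LZ.m_closed by blast
        have k2: "k \<in> insert j T" using k(1) by simp
        have "goodT (g \<otimes> hh j) hh (insert j T) i (c \<otimes>\<^bsub>L i\<^esub> p i (hh j))"
          unfolding goodT_def using k2 k(2) eq by (intro disjI1 bexI[of _ k] conjI)
        then show ?thesis using c2 by (intro bexI)
      next
        assume nk: "\<forall>k\<in>T. i \<notin> X k" and gc: "p i g = c"
        show ?thesis
        proof (cases "i \<in> X j")
          case True
          have eq: "p i (g \<otimes> hh j) = p i (hh j) \<otimes>\<^bsub>L i\<^esub> c"
            using pm gc center_comm[OF c, of "p i (hh j)"] hj by simp
          have "goodT (g \<otimes> hh j) hh (insert j T) i c"
            unfolding goodT_def using True eq by (intro disjI1 bexI[of _ j] conjI) simp_all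
          then show ?thesis using c by (intro bexI)
        next
          case False
          then have z: "p i (hh j) \<in> group_center (L i)" using P2[OF i j] hh[OF j] by blast
          have eq: "p i (g \<otimes> hh j) = c \<otimes>\<^bsub>L i\<^esub> p i (hh j)" using pm gc by simp
          have c2: "c \<otimes>\<^bsub>L i\<^esub> p i (hh j) \<in> group_center (L i)" using c z LZ.m_closed by blast
          have "\<forall>k\<in>insert j T. i \<notin> X k" using nk False by simp
          then have "goodT (g \<otimes> hh j) hh (insert j T) i (c \<otimes>\<^bsub>L i\<^esub> p i (hh j))"
            unfolding goodT_def using eq by (intro disjI2 conjI)
          then show ?thesis using c2 by (intro bexI)
        qed
      qed
    qed
  qed
  have finJ: "finite J" using J_sub finite_subset by blast
  obtain g where g: "g \<in> carrier G" and gp: "\<forall>i<n. \<exists>c\<in>group_center (L i). goodT g hh J i c"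
    using claim[OF finJ subset_refl] by (elim bexE)
  show ?thesis
  proof (intro bexI[OF _ g] allI impI)
    fix i assume i: "i < n"
    obtain c where c: "c \<in> group_center (L i)" and cc: "goodT g hh J i c"
      using gp[rule_format, OF i] by (elim bexE)
    have nB: "\<not> (\<forall>j\<in>J. i \<notin> X j)" using P3[OF i] by simp
    have "\<exists>j\<in>J. i \<in> X j \<and> p i g = p i (hh j) \<otimes>\<^bsub>L i\<^esub> c"
      using cc nB unfolding goodT_def by (elim disjE conjE) simp_all
    then obtain j where jj: "j \<in> J" "i \<in> X j" "p i g = p i (hh j) \<otimes>\<^bsub>L i\<^esub> c" by (elim bexE conjE)
    have "\<exists>c\<in>group_center (L i). p i g = p i (hh j) \<otimes>\<^bsub>L i\<^esub> c" using c jj(3) by (intro bexI)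
    then show "\<exists>j\<in>J. i \<in> X j \<and> (\<exists>c\<in>group_center (L i). p i g = p i (hh j) \<otimes>\<^bsub>L i\<^esub> c)"
      using jj(1,2) by (intro bexI[of _ j] conjI)
  qed
qed

end

lemma mat_vec_unit_index:
  assumes c: "(c :: complex mat) \<in> carrier_mat d d" and i: "i < d" and j: "j < d"
  shows "(c *\<^sub>v unit_vec d j) $ i = c $$ (i, j)"
proof -
  have "(c *\<^sub>v unit_vec d j) $ i = (\<Sum>k<d. c $$ (i, k) * (if k = j then 1 else 0))"
    using c i j by (simp add: scalar_prod_def unit_vec_def lessThan_atLeast0)
  also have "\<dots> = c $$ (i, j)" using j by (simp add: if_distrib cong: if_cong)
  finally show ?thesis .
qed

lemma schur_scalar:
  assumes irr: "irreducible_rep G d \<Phi>" and c: "c \<in> carrier_mat d d"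
    and comm: "\<And>g. g \<in> carrier G \<Longrightarrow> c * \<Phi> g = \<Phi> g * c"
  shows "\<exists>lam. c = lam \<cdot>\<^sub>m 1\<^sub>m d"
proof -
  have d: "d > 0" and rep: "\<And>g. g \<in> carrier G \<Longrightarrow> \<Phi> g \<in> carrier_mat d d"
    and inv: "\<And>W. invariant_subspace G d \<Phi> W \<Longrightarrow> W = {0\<^sub>v d} \<or> W = carrier_vec d"
    using irr unfolding irreducible_rep_def representation_def by auto
  have "degree (char_poly c) = d" using degree_monic_char_poly[OF c] by simp
  then have "\<not> constant (poly (char_poly c))" using d constant_degree[of "char_poly c"] by simp
  then obtain lam where "poly (char_poly c) lam = 0" using fundamental_theorem_of_algebra by blast
  then have "eigenvalue c lam" using eigenvalue_root_char_poly[OF c] by simp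
  then obtain v where v: "eigenvector c v lam" unfolding eigenvalue_def by blast
  have vc: "v \<in> carrier_vec d" "v \<noteq> 0\<^sub>v d" "c *\<^sub>v v = lam \<cdot>\<^sub>v v"
    using v c unfolding eigenvector_def by auto
  define W where "W = {w \<in> carrier_vec d. c *\<^sub>v w = lam \<cdot>\<^sub>v w}"
  have "invariant_subspace G d \<Phi> W" unfolding invariant_subspace_def
  proof (intro conjI ballI allI)
    show "W \<subseteq> carrier_vec d" unfolding W_def by auto
    show "0\<^sub>v d \<in> W" unfolding W_def using c by (auto intro!: eq_vecI)
  next
    fix x y assume x: "x \<in> W" and y: "y \<in> W"
    then show "x + y \<in> W" unfolding W_def using c
      by (auto simp: mult_add_distrib_mat_vec smult_add_distrib_vec)
  next
    fix a :: complex and x assume x: "x \<in> W"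
    then show "a \<cdot>\<^sub>v x \<in> W" unfolding W_def using c
      by (auto simp: mult_mat_vec smult_smult_assoc mult.commute)
  next
    fix g x assume g: "g \<in> carrier G" and x: "x \<in> W"
    have xc: "x \<in> carrier_vec d" "c *\<^sub>v x = lam \<cdot>\<^sub>v x" using x unfolding W_def by auto
    have "c *\<^sub>v (\<Phi> g *\<^sub>v x) = (c * \<Phi> g) *\<^sub>v x" using c rep[OF g] xc by simp
    also have "\<dots> = (\<Phi> g * c) *\<^sub>v x" using comm[OF g] by simp
    also have "\<dots> = \<Phi> g *\<^sub>v (lam \<cdot>\<^sub>v x)" using c rep[OF g] xc by simp
    also have "\<dots> = lam \<cdot>\<^sub>v (\<Phi> g *\<^sub>v x)" using rep[OF g] xc mult_mat_vec by blast
    finally show "\<Phi> g *\<^sub>v x \<in> W" unfolding W_def using rep[OF g] xc by auto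
  qed
  then have "W = {0\<^sub>v d} \<or> W = carrier_vec d" by (rule inv)
  moreover have "v \<in> W" using vc unfolding W_def by auto
  ultimately have Wall: "W = carrier_vec d" using vc(2) by auto
  have "c = lam \<cdot>\<^sub>m 1\<^sub>m d"
  proof (rule eq_matI)
    fix i j assume i: "i < dim_row (lam \<cdot>\<^sub>m 1\<^sub>m d)" and j: "j < dim_col (lam \<cdot>\<^sub>m 1\<^sub>m d)"
    then have ij: "i < d" "j < d" by auto
    have "unit_vec d j \<in> W" using Wall by simp
    then have e: "c *\<^sub>v unit_vec d j = lam \<cdot>\<^sub>v unit_vec d j" unfolding W_def by auto
    have "c $$ (i, j) = (c *\<^sub>v unit_vec d j) $ i" using mat_vec_unit_index[OF c ij] by simp
    also have "\<dots> = (lam \<cdot>\<^sub>v unit_vec d j) $ i" using e by simp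
    also have "\<dots> = (lam \<cdot>\<^sub>m 1\<^sub>m d) $$ (i, j)" using ij by simp
    finally show "c $$ (i, j) = (lam \<cdot>\<^sub>m 1\<^sub>m d) $$ (i, j)" .
  qed (use c in auto)
  then show ?thesis by blast
qed

lemma trace_scalar:
  assumes A: "(A :: complex mat) \<in> carrier_mat d d"
  shows "mat_trace (A * (lam \<cdot>\<^sub>m 1\<^sub>m d)) = lam * mat_trace A"
proof -
  have "A * (lam \<cdot>\<^sub>m 1\<^sub>m d) = lam \<cdot>\<^sub>m A" using mult_smult_distrib[OF A, of "1\<^sub>m d" d lam] A by simp
  then show ?thesis unfolding mat_trace_def using A by (simp add: sum_distrib_left)
qed


theorem mainTheorem6:
  fixes G :: "('a, 'b) monoid_scheme"
    and n :: nat
    and d :: "nat \<Rightarrow> nat"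
    and \<Phi> :: "nat \<Rightarrow> 'a \<Rightarrow> complex mat"
  assumes perfect: "perfect_group G"
    and fin: "finite (carrier G)"
    and irred: "\<And>i. i < n \<Longrightarrow> irreducible_rep G (d i) (\<Phi> i)"
    and faithful: "\<And>g. g \<in> carrier G \<Longrightarrow> (\<forall>i < n. \<Phi> i g = 1\<^sub>m (d i)) \<Longrightarrow> g = \<one>\<^bsub>G\<^esub>"
    and qs: "\<And>i. i < n \<Longrightarrow> quasisimple (rep_image G (d i) (\<Phi> i))"
  shows "(\<exists>J H. J \<subseteq> {..<n} \<and> internal_central_product G J H \<and>
            (\<forall>j \<in> J. quasisimple_cover_of (G\<lparr>carrier := H j\<rparr>)
                 (rep_image G (d j) (\<Phi> j) Mod group_center (rep_image G (d j) (\<Phi> j)))))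
     \<and> ((\<forall>g \<in> carrier G. (\<Sum>i<n. mat_trace (\<Phi> i g)) \<noteq> 0) \<longrightarrow>
         (\<forall>K X. subgroup K G \<longrightarrow> quasisimple (G\<lparr>carrier := K\<rparr>) \<longrightarrow> X \<subseteq> {..<n} \<longrightarrow>
              (\<lambda>i. restrict (\<Phi> i) (carrier G)) ` X \<subset> (\<lambda>i. restrict (\<Phi> i) (carrier G)) ` {..<n} \<longrightarrow>
              (\<forall>i \<in> X. \<Phi> i ` K = \<Phi> i ` carrier G) \<longrightarrow>
              (\<exists>h \<in> K. \<forall>i \<in> X. mat_trace (\<Phi> i h) = 0))
         \<longrightarrow> quasisimple G)"
proof -
  have grp: "group G" and perf: "derived G (carrier G) = carrier G"
    using perfect unfolding perfect_group_def by auto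
  have rep: "\<And>i. i < n \<Longrightarrow> representation G (d i) (\<Phi> i)"
    using irred unfolding irreducible_rep_def by auto
  have carrL: "\<And>i. carrier (rep_image G (d i) (\<Phi> i)) = \<Phi> i ` carrier G"
    by (simp add: rep_image_def mat_group_def)
  have multL: "\<And>i x y. x \<otimes>\<^bsub>rep_image G (d i) (\<Phi> i)\<^esub> y = x * y"
    by (simp add: rep_image_def mat_group_def)
  have oneL: "\<And>i. \<one>\<^bsub>rep_image G (d i) (\<Phi> i)\<^esub> = 1\<^sub>m (d i)"
    by (simp add: rep_image_def mat_group_def)
  have QS: "qsetup G n (\<lambda>i. rep_image G (d i) (\<Phi> i)) \<Phi>"
  proof (rule qsetup.intro[OF grp], rule qsetup_axioms.intro)
    show "derived G (carrier G) = carrier G" using perf .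
  next
    fix i assume i: "i < n"
    show "\<Phi> i \<in> hom G (rep_image G (d i) (\<Phi> i))"
      using rep[OF i] unfolding hom_def representation_def by (auto simp: carrL multL)
  next
    fix i assume i: "i < n"
    show "\<Phi> i ` carrier G = carrier (rep_image G (d i) (\<Phi> i))" using carrL by simp
  next
    fix g assume g: "g \<in> carrier G" and e: "\<And>i. i < n \<Longrightarrow> \<Phi> i g = \<one>\<^bsub>rep_image G (d i) (\<Phi> i)\<^esub>"
    show "g = \<one>\<^bsub>G\<^esub>" using faithful[OF g] e oneL by simp
  next
    fix i assume i: "i < n"
    show "quasisimple (rep_image G (d i) (\<Phi> i))" using qs[OF i] .
  qed
  interpret Q: qsetup G n "\<lambda>i. rep_image G (d i) (\<Phi> i)" \<Phi> using QS .
  obtain J where J: "J \<subseteq> {..<n}" "Q.NT J = Q.NT {..<n}" "\<forall>j\<in>J. Q.NT (J - {j}) \<noteq> Q.NT {..<n}"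
    using Q.exists_J by blast
  interpret Q2: qsetup2 G n "\<lambda>i. rep_image G (d i) (\<Phi> i)" \<Phi> J
    using QS J by (intro qsetup2.intro qsetup2_axioms.intro) auto
  have part1: "\<exists>J H. J \<subseteq> {..<n} \<and> internal_central_product G J H \<and>
            (\<forall>j \<in> J. quasisimple_cover_of (G\<lparr>carrier := H j\<rparr>)
                 (rep_image G (d j) (\<Phi> j) Mod group_center (rep_image G (d j) (\<Phi> j))))"
    using Q2.part1 J(1) by blast
  have part2: "quasisimple G"
    if tr: "\<forall>g \<in> carrier G. (\<Sum>i<n. mat_trace (\<Phi> i g)) \<noteq> 0"
    and dh: "\<forall>K X. subgroup K G \<longrightarrow> quasisimple (G\<lparr>carrier := K\<rparr>) \<longrightarrow> X \<subseteq> {..<n} \<longrightarrow>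
              (\<lambda>i. restrict (\<Phi> i) (carrier G)) ` X \<subset> (\<lambda>i. restrict (\<Phi> i) (carrier G)) ` {..<n} \<longrightarrow>
              (\<forall>i \<in> X. \<Phi> i ` K = \<Phi> i ` carrier G) \<longrightarrow>
              (\<exists>h \<in> K. \<forall>i \<in> X. mat_trace (\<Phi> i h) = 0)"
  proof (cases "\<exists>j\<in>J. \<exists>k\<in>J. j \<noteq> k")
    case True
    have ex: "\<exists>h\<in>Q2.H j. \<forall>i\<in>Q2.X j. mat_trace (\<Phi> i h) = 0" if j: "j \<in> J" for j
    proof -
      obtain k where k: "k \<in> J" "k \<noteq> j" using True j by metis
      have kn: "k < n" using k J(1) by auto
      have XJ: "Q2.X j \<subseteq> {..<n}" unfolding Q2.X_def by auto
      have sub: "subgroup (Q2.H j) G" using Q2.H_subgroup .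
      have qH: "quasisimple (G\<lparr>carrier := Q2.H j\<rparr>)"
        using Q2.H_cover[OF j] unfolding quasisimple_cover_of_def by auto
      have full: "\<forall>i\<in>Q2.X j. \<Phi> i ` Q2.H j = \<Phi> i ` carrier G"
        unfolding Q2.X_def using carrL by auto
      have notin: "restrict (\<Phi> k) (carrier G) \<notin> (\<lambda>i. restrict (\<Phi> i) (carrier G)) ` Q2.X j"
      proof
        assume "restrict (\<Phi> k) (carrier G) \<in> (\<lambda>i. restrict (\<Phi> i) (carrier G)) ` Q2.X j"
        then obtain i where i: "i \<in> Q2.X j" and e: "restrict (\<Phi> k) (carrier G) = restrict (\<Phi> i) (carrier G)"
          by blast
        have eqx: "\<And>x. x \<in> carrier G \<Longrightarrow> \<Phi> k x = \<Phi> i x"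
          using e by (metis restrict_apply')
        have "\<Phi> k ` Q2.H j = \<Phi> i ` Q2.H j" by (rule image_cong[OF refl]) (use eqx Q2.H_carrier in blast)
        also have "\<dots> = \<Phi> i ` carrier G" using full i by blast
        also have "\<dots> = \<Phi> k ` carrier G" by (rule image_cong[OF refl]) (simp add: eqx)
        finally have "k \<in> Q2.X j" unfolding Q2.X_def using kn carrL by simp
        then show False using Q2.P4[OF kn j k(1) _ Q2.P1[OF k(1)]] k(2) by blast
      qed
      have "(\<lambda>i. restrict (\<Phi> i) (carrier G)) ` Q2.X j \<subset> (\<lambda>i. restrict (\<Phi> i) (carrier G)) ` {..<n}"
        using XJ notin kn by blast
      then show ?thesis using dh sub qH XJ full by blast
    qed
    define hh where "hh j = (SOME h. h \<in> Q2.H j \<and> (\<forall>i\<in>Q2.X j. mat_trace (\<Phi> i h) = 0))" for j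
    have hh: "hh j \<in> Q2.H j \<and> (\<forall>i\<in>Q2.X j. mat_trace (\<Phi> i (hh j)) = 0)" if j: "j \<in> J" for j
      unfolding hh_def using someI_ex[OF ex[OF j, unfolded Bex_def]] by blast
    have hhH: "\<And>j. j \<in> J \<Longrightarrow> hh j \<in> Q2.H j" using hh by blast
    have exg: "\<exists>g\<in>carrier G. \<forall>i<n. \<exists>j\<in>J. i \<in> Q2.X j \<and>
        (\<exists>c\<in>group_center (rep_image G (d i) (\<Phi> i)). \<Phi> i g = \<Phi> i (hh j) \<otimes>\<^bsub>rep_image G (d i) (\<Phi> i)\<^esub> c)"
      by (rule Q2.combine[of hh]) (rule hhH)
    obtain g where g: "g \<in> carrier G" and gp: "\<forall>i<n. \<exists>j\<in>J. i \<in> Q2.X j \<and>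
        (\<exists>c\<in>group_center (rep_image G (d i) (\<Phi> i)). \<Phi> i g = \<Phi> i (hh j) \<otimes>\<^bsub>rep_image G (d i) (\<Phi> i)\<^esub> c)"
      using exg by (elim bexE)
    have "\<forall>i\<in>{..<n}. mat_trace (\<Phi> i g) = 0"
    proof
      fix i assume "i \<in> {..<n}"
      then have i: "i < n" by simp
      obtain j c where j: "j \<in> J" "i \<in> Q2.X j" and c: "c \<in> group_center (rep_image G (d i) (\<Phi> i))"
        and e: "\<Phi> i g = \<Phi> i (hh j) * c"
        using gp[rule_format, OF i] multL by (elim bexE conjE) auto
      have cC: "c \<in> \<Phi> i ` carrier G" using center_carrier[OF c] carrL by simp
      have rr: "\<And>x. x \<in> carrier G \<Longrightarrow> \<Phi> i x \<in> carrier_mat (d i) (d i)"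
        using rep[OF i] unfolding representation_def by auto
      have cm: "c \<in> carrier_mat (d i) (d i)" using cC rr by auto
      have comm: "\<And>x. x \<in> carrier G \<Longrightarrow> c * \<Phi> i x = \<Phi> i x * c"
      proof -
        fix x assume x: "x \<in> carrier G"
        have "\<Phi> i x \<in> carrier (rep_image G (d i) (\<Phi> i))" using x carrL by simp
        then show "c * \<Phi> i x = \<Phi> i x * c" using center_comm[OF c] multL by metis
      qed
      obtain lam where lam: "c = lam \<cdot>\<^sub>m 1\<^sub>m (d i)" using schur_scalar[OF irred[OF i] cm comm] by blast
      have hjc: "hh j \<in> carrier G" using hh[OF j(1)] Q2.H_carrier by blast
      have "mat_trace (\<Phi> i g) = lam * mat_trace (\<Phi> i (hh j))"
        unfolding e lam using trace_scalar[OF rr[OF hjc]] by simp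
      also have "\<dots> = 0" using hh[OF j(1)] j(2) by simp
      finally show "mat_trace (\<Phi> i g) = 0" .
    qed
    then have "(\<Sum>i<n. mat_trace (\<Phi> i g)) = 0" by simp
    then show ?thesis using tr g by blast
  next
    case False
    show ?thesis
    proof (cases "J = {}")
      case True
      show ?thesis
      proof (cases "n = 0")
        case True
        have "(\<Sum>i<n. mat_trace (\<Phi> i \<one>\<^bsub>G\<^esub>)) \<noteq> 0" using tr Q.one_closed by blast
        then show ?thesis using True by simp
      next
        case False
        then obtain j where "j \<in> J" using Q2.P3[of 0] by blast
        then show ?thesis using \<open>J = {}\<close> by simp
      qed
    next
      case nonempty: False
      then obtain j where j: "j \<in> J" by blast
      have Jj: "J = {j}" using j False by blast
      have "generate G (Q2.H j) = carrier G" using Q2.gen_all Jj by simp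
      moreover have "generate G (Q2.H j) = Q2.H j"
        using group.generate_subgroup_incl[OF grp subset_refl Q2.H_subgroup] generate.incl[of _ "Q2.H j" G]
        by blast
      ultimately have "Q2.H j = carrier G" by simp
      then show ?thesis using Q2.H_cover[OF j] unfolding quasisimple_cover_of_def by simp
    qed
  qed
  show ?thesis using part1 part2 by blast
qed

end
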